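(* For every base $\mathscr{B}$ and IPL formula $\varphi$: $\Vdash_{\mathscr{B}}\varphi$ if and only if for every base $\mathscr{X}\supseteq\mathscr{B}$ and every atom $p$, if $\varphi\Vdash_{\mathscr{X}}p$ then $\Vdash_{\mathscr{X}}p$.
   Context: Fix a denumerable set $\mathbb{A}$ of atoms. IPL formulas are built from atoms and $\bot$ using $\wedge,\vee,\to$. An atomic rule has the form $(Q_1\triangleright q_1,\dots,Q_n\triangleright q_n)\Rightarrow q$ with $n\ge 0$, $q,q_i\in\mathbb{A}$, $Q_i$ finite sets of atoms; a base is a set of atomic rules. Derivability $\vdash_{\mathscr{B}}$ is the least relation with $S\cup\{q\}\vdash_{\mathscr{B}} q$, and if $(Q_1\triangleright q_1,\dots,Q_n\triangleright q_n)\Rightarrow q\in\mathscr{B}$ and $S\cup Q_i\vdash_{\mathscr{B}} q_i$ for all $i$ then $S\vdash_{\mathscr{B}} q$. Sandqvist's support $\Vdash_{\mathscr{B}}$: $\Vdash_{\mathscr{B}}p$ iff $\emptyset\vdash_{\mathscr{B}}p$; $\Vdash_{\mathscr{B}}\varphi\to\psi$ iff $\varphi\Vdash_{\mathscr{B}}\psi$; $\Vdash_{\mathscr{B}}\varphi\wedge\psi$ iff $\Vdash_{\mathscr{B}}\varphi$ and $\Vdash_{\mathscr{B}}\psi$; $\Vdash_{\mathscr{B}}\varphi\vee\psi$ iff for all $\mathscr{C}\supseteq\mathscr{B}$ and atoms $p$, if $\varphi\Vdash_{\mathscr{C}}p$ and $\psi\Vdash_{\mathscr{C}}p$ then $\Vdash_{\mathscr{C}}p$;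 $\Vdash_{\mathscr{B}}\bot$ iff $\Vdash_{\mathscr{B}}p$ for all atoms $p$; for nonempty finite $\Gamma$, $\Gamma\Vdash_{\mathscr{B}}\varphi$ iff for every $\mathscr{C}\supseteq\mathscr{B}$, if $\Vdash_{\mathscr{C}}\psi$ for all $\psi\in\Gamma$ then $\Vdash_{\mathscr{C}}\varphi$. *)

theory Defs
  imports Main "HOL-Library.FSet"
begin

type_synonym atom = nat

datatype form = Atom atom | Bot | Conj form form | Disj form form | Imp form form

text \<open>An atomic rule (Q1 |> q1, ..., Qn |> qn) => q: a finite list of premises,
  each a finite set of atoms Qi with an atom qi, and a conclusion q.\<close>
datatype rule = Rule "(atom fset \<times> atom) list" atom

type_synonym base = "rule set"

inductive derives :: "base \<Rightarrow> atom set \<Rightarrow> atom \<Rightarrow> bool" where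
  der_ax: "q \<in> S \<Longrightarrow> derives B S q"
| der_rule: "Rule prems q \<in> B \<Longrightarrow> (\<forall>(Q, qi) \<in> set prems. derives B (S \<union> fset Q) qi)
             \<Longrightarrow> derives B S q"

text \<open>Sandqvist's support. The clauses for implication and disjunction unfold the
  consequence relation phi |=_C psi (singleton context) inline.\<close>
fun supp :: "base \<Rightarrow> form \<Rightarrow> bool" where
  "supp B (Atom p) = derives B {} p"
| "supp B (Imp \<phi> \<psi>) = (\<forall>C. B \<subseteq> C \<longrightarrow> supp C \<phi> \<longrightarrow> supp C \<psi>)"
| "supp B (Conj \<phi> \<psi>) = (supp B \<phi> \<and> supp B \<psi>)"
| "supp B (Disj \<phi> \<psi>) = (\<forall>C p. B \<subseteq> C \<longrightarrow>
      (\<forall>D. C \<subseteq> D \<longrightarrow> supp D \<phi> \<longrightarrow> derives D {} p) \<longrightarrow>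
      (\<forall>D. C \<subseteq> D \<longrightarrow> supp D \<psi> \<longrightarrow> derives D {} p) \<longrightarrow>
      derives C {} p)"
| "supp B Bot = (\<forall>p. derives B {} p)"

definition supp_from :: "base \<Rightarrow> form set \<Rightarrow> form \<Rightarrow> bool" where
  "supp_from B \<Gamma> \<phi> = (\<forall>C. B \<subseteq> C \<longrightarrow> (\<forall>\<psi>\<in>\<Gamma>. supp C \<psi>) \<longrightarrow> supp C \<phi>)"

end

theory Submission
  imports Defs
begin

lemma derives_mono: "derives B S q \<Longrightarrow> B \<subseteq> C \<Longrightarrow> derives C S q"
proof (induction rule: derives.induct)
  case (der_ax q S B) then show ?case by (simp add: derives.der_ax)
next
  case (der_rule prems q B S)
  then show ?case by (intro derives.der_rule[of prems q]) auto
qed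

lemma supp_mono: "supp B \<phi> \<Longrightarrow> B \<subseteq> C \<Longrightarrow> supp C \<phi>"
proof (induction \<phi> arbitrary: B C)
  case (Atom x) then show ?case using derives_mono by simp
next
  case Bot then show ?case using derives_mono by (simp, blast)
next
  case (Conj \<phi>1 \<phi>2) then show ?case by auto
next
  case (Disj \<phi>1 \<phi>2)
  show ?case unfolding supp.simps
  proof (intro allI impI)
    fix C' p assume a: "C \<subseteq> C'" "\<forall>D. C' \<subseteq> D \<longrightarrow> supp D \<phi>1 \<longrightarrow> derives D {} p"
      "\<forall>D. C' \<subseteq> D \<longrightarrow> supp D \<phi>2 \<longrightarrow> derives D {} p"
    have "B \<subseteq> C'" using a(1) Disj.prems(2) by (rule order_trans[rotated])
    then show "derives C' {} p" using Disj.prems(1) a(2,3) unfolding supp.simps by blast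
  qed
next
  case (Imp \<phi>1 \<phi>2)
  show ?case unfolding supp.simps
  proof (intro allI impI)
    fix C' assume a: "C \<subseteq> C'" "supp C' \<phi>1"
    have "B \<subseteq> C'" using a(1) Imp.prems(2) by (rule order_trans[rotated])
    then show "supp C' \<phi>2" using Imp.prems(1) a(2) unfolding supp.simps by blast
  qed
qed

lemma back_dir: "(\<forall>X p. B \<subseteq> X \<longrightarrow> supp_from X {\<phi>} (Atom p) \<longrightarrow> supp X (Atom p)) \<Longrightarrow> supp B \<phi>"
proof (induction \<phi> arbitrary: B)
  case (Atom x) then show ?case by (auto simp: supp_from_def)
next
  case Bot then show ?case by (auto simp: supp_from_def)
next
  case (Conj \<phi>1 \<phi>2)
  have "supp B \<phi>1"
    using Conj.prems by (intro Conj.IH(1)) (auto simp: supp_from_def)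
  moreover have "supp B \<phi>2"
    using Conj.prems by (intro Conj.IH(2)) (auto simp: supp_from_def)
  ultimately show ?case by simp
next
  case (Disj \<phi>1 \<phi>2)
  show ?case
  proof (simp, intro allI impI)
    fix C p
    assume BC: "B \<subseteq> C" and h1: "\<forall>D. C \<subseteq> D \<longrightarrow> supp D \<phi>1 \<longrightarrow> derives D {} p"
      and h2: "\<forall>D. C \<subseteq> D \<longrightarrow> supp D \<phi>2 \<longrightarrow> derives D {} p"
    have "supp_from C {Disj \<phi>1 \<phi>2} (Atom p)"
      unfolding supp_from_def
    proof (intro allI impI)
      fix D assume CD: "C \<subseteq> D" and sD: "\<forall>\<psi>\<in>{Disj \<phi>1 \<phi>2}. supp D \<psi>"
      then have "supp D (Disj \<phi>1 \<phi>2)" by simp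
      then have "(\<forall>E. D \<subseteq> E \<longrightarrow> supp E \<phi>1 \<longrightarrow> derives E {} p) \<longrightarrow>
           (\<forall>E. D \<subseteq> E \<longrightarrow> supp E \<phi>2 \<longrightarrow> derives E {} p) \<longrightarrow> derives D {} p"
        unfolding supp.simps by blast
      moreover have "\<forall>E. D \<subseteq> E \<longrightarrow> supp E \<phi>1 \<longrightarrow> derives E {} p"
        using h1 CD by (meson order_trans)
      moreover have "\<forall>E. D \<subseteq> E \<longrightarrow> supp E \<phi>2 \<longrightarrow> derives E {} p"
        using h2 CD by (meson order_trans)
      ultimately have "derives D {} p" by blast
      then show "supp D (Atom p)" by simp
    qed
    then show "derives C {} p" using Disj.prems BC by fastforce
  qed
next
  case (Imp \<phi>1 \<phi>2)
  show ?case
  proof (simp, intro allI impI)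
    fix C assume BC: "B \<subseteq> C" and s1: "supp C \<phi>1"
    show "supp C \<phi>2"
    proof (rule Imp.IH(2), intro allI impI)
      fix X p assume CX: "C \<subseteq> X" and f: "supp_from X {\<phi>2} (Atom p)"
      have "supp_from X {Imp \<phi>1 \<phi>2} (Atom p)"
        unfolding supp_from_def
      proof (intro allI impI)
        fix D assume XD: "X \<subseteq> D" and sD: "\<forall>\<psi>\<in>{Imp \<phi>1 \<phi>2}. supp D \<psi>"
        have "supp D \<phi>1" using s1 CX XD supp_mono by blast
        then have "supp D \<phi>2" using sD by simp
        then show "supp D (Atom p)" using f XD unfolding supp_from_def by blast
      qed
      then show "supp X (Atom p)" using Imp.prems BC CX by blast
    qed
  qed
qed

theorem corollary1:
  fixes B :: base and \<phi> :: form
  shows "supp B \<phi> \<longleftrightarrow> (\<forall>X p. B \<subseteq> X \<longrightarrow> supp_from X {\<phi>} (Atom p) \<longrightarrow> supp X (Atom p))"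
proof
  assume "supp B \<phi>"
  then show "\<forall>X p. B \<subseteq> X \<longrightarrow> supp_from X {\<phi>} (Atom p) \<longrightarrow> supp X (Atom p)"
    unfolding supp_from_def using supp_mono by blast
next
  assume "\<forall>X p. B \<subseteq> X \<longrightarrow> supp_from X {\<phi>} (Atom p) \<longrightarrow> supp X (Atom p)"
  then show "supp B \<phi>" by (rule back_dir)
qed

end
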